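(* Let $A$ be an abelian group, $a\in A$ and $\varphi$ an endomorphism of $A$. If $\varphi$ is inertial or left-inertial, then the torsion subgroup of $\mathbb{Z}[\varphi]a$ is finite.
   Context: Abelian groups are written additively. An endomorphism $\varphi$ of $A$ is inertial if $(\varphi(X)+X)/X$ is finite for every subgroup $X\le A$, and left-inertial if $X/(X\cap\varphi(X))$ is finite for every $X\le A$. $\mathbb{Z}[\varphi]a$ is the smallest $\varphi$-invariant subgroup of $A$ containing $a$. *)

theory Defs
  imports Main
begin

definition is_subgroup :: "'a::ab_group_add set \<Rightarrow> bool" where
  "is_subgroup X \<longleftrightarrow> 0 \<in> X \<and> (\<forall>x\<in>X. \<forall>y\<in>X. x + y \<in> X) \<and> (\<forall>x\<in>X. - x \<in> X)"

definition is_endo :: "('a::ab_group_add \<Rightarrow> 'a) \<Rightarrow> bool" where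
  "is_endo f \<longleftrightarrow> (\<forall>x y. f (x + y) = f x + f y)"

definition sum_set :: "'a::ab_group_add set \<Rightarrow> 'a set \<Rightarrow> 'a set" where
  "sum_set Y Z = {y + z | y z. y \<in> Y \<and> z \<in> Z}"

definition finite_quot :: "'a::ab_group_add set \<Rightarrow> 'a set \<Rightarrow> bool" where
  "finite_quot Y X \<longleftrightarrow> finite ((\<lambda>y. (\<lambda>x. y + x) ` X) ` Y)"

definition inertial :: "('a::ab_group_add \<Rightarrow> 'a) \<Rightarrow> bool" where
  "inertial f \<longleftrightarrow> (\<forall>X. is_subgroup X \<longrightarrow> finite_quot (sum_set (f ` X) X) X)"

definition left_inertial :: "('a::ab_group_add \<Rightarrow> 'a) \<Rightarrow> bool" where
  "left_inertial f \<longleftrightarrow> (\<forall>X. is_subgroup X \<longrightarrow> finite_quot X (X \<inter> f ` X))"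

definition Zphi :: "('a::ab_group_add \<Rightarrow> 'a) \<Rightarrow> 'a \<Rightarrow> 'a set" where
  "Zphi f a = \<Inter>{S. is_subgroup S \<and> f ` S \<subseteq> S \<and> a \<in> S}"

definition torsion_part :: "'a::ab_group_add set \<Rightarrow> 'a set" where
  "torsion_part B = {x \<in> B. \<exists>n::nat. n \<ge> 1 \<and> (\<Sum>i<n. x) = 0}"

end

theory Submission
  imports Defs "HOL-Computational_Algebra.Polynomial" "HOL-Computational_Algebra.Primes" "HOL-Library.FuncSet"
begin


primrec nsm :: "nat \<Rightarrow> 'a::ab_group_add \<Rightarrow> 'a" where
  "nsm 0 x = 0" | "nsm (Suc n) x = x + nsm n x"

lemma nsm_sum: "nsm n x = (\<Sum>i<n. x)"
  by (induction n) (auto simp: add.commute)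

lemma nsm_add: "nsm (m + n) x = nsm m x + nsm n x"
  by (induction m) (auto simp: add.assoc)

lemma nsm_plus: "nsm n (x + y) = nsm n x + nsm n y"
  by (induction n) (auto simp: algebra_simps)

lemma nsm_neg: "nsm n (- x) = - nsm n x"
  by (induction n) (auto simp: algebra_simps)

lemma nsm_mult: "nsm (m * n) x = nsm m (nsm n x)"
  by (induction m) (auto simp: nsm_add nsm_plus)

lemma nsm_zero[simp]: "nsm n 0 = 0"
  by (induction n) auto

definition zs :: "int \<Rightarrow> 'a::ab_group_add \<Rightarrow> 'a" where
  "zs k x = (if 0 \<le> k then nsm (nat k) x else - nsm (nat (-k)) x)"

lemma zs_nat: "zs (int n) x = nsm n x" by (simp add: zs_def)

lemma zs_0[simp]: "zs 0 x = 0" by (simp add: zs_def)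
lemma zs_1[simp]: "zs 1 x = x" by (simp add: zs_def)
lemma zs_zero[simp]: "zs k 0 = 0" by (simp add: zs_def)

lemma zs_plus: "zs k (x + y) = zs k x + zs k y"
  by (simp add: zs_def nsm_plus algebra_simps)

lemma zs_neg: "zs k (- x) = - zs k x"
  by (simp add: zs_def nsm_neg)

lemma zs_diff: "zs k (x - y) = zs k x - zs k y"
  using zs_plus[of k x "-y"] zs_neg[of k y] by simp

lemma zs_uminus: "zs (- k) x = - zs k x"
  by (cases "k = 0") (auto simp: zs_def)

lemma nsm_diff: "m \<le> n \<Longrightarrow> nsm (n - m) x = nsm n x - nsm m x"
  using nsm_add[of "n - m" m x] by simp

lemma zs_add: "zs (a + b) x = zs a x + zs b x"
proof -
  have key: "zs (int m - int n) x = nsm m x - nsm n x" for m n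
  proof (cases "n \<le> m")
    case True
    then have "int m - int n = int (m - n)" by simp
    then have "zs (int m - int n) x = nsm (m - n) x" by (simp only: zs_nat)
    then show ?thesis using True by (simp add: nsm_diff)
  next
    case False
    then have "int m - int n = - int (n - m)" by simp
    then have "zs (int m - int n) x = - nsm (n - m) x" by (simp only: zs_uminus zs_nat)
    then show ?thesis using False by (simp add: nsm_diff)
  qed
  obtain a1 a2 where a: "a = int a1 - int a2" by (metis int_diff_cases)
  obtain b1 b2 where b: "b = int b1 - int b2" by (metis int_diff_cases)
  have "a + b = int (a1 + b1) - int (a2 + b2)" using a b by simp
  then have e1: "zs (a + b) x = nsm (a1 + b1) x - nsm (a2 + b2) x" using key[of "a1+b1" "a2+b2"] by (simp only:)
  have e2: "zs a x = nsm a1 x - nsm a2 x" using a key by simp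
  have e3: "zs b x = nsm b1 x - nsm b2 x" using b key by simp
  show ?thesis unfolding e1 e2 e3 nsm_add by (simp add: algebra_simps)
qed

lemma zs_sub: "zs (a - b) x = zs a x - zs b x"
  using zs_add[of a "-b" x] zs_uminus[of b x] by simp

lemma zs_mult: "zs (a * b) x = zs a (zs b x)"
proof -
  have "zs (int m * b) x = zs (int m) (zs b x)" for m
    by (induction m) (auto simp: zs_add distrib_right zs_nat)
  moreover have "a = int (nat a) \<or> a = - int (nat (-a))" by auto
  ultimately show ?thesis
    by (metis minus_mult_left zs_uminus)
qed

lemma zs_sum: "zs k (sum g A) = (\<Sum>i\<in>A. zs k (g i))"
  by (induction A rule: infinite_finite_induct) (auto simp: zs_plus)

lemma endo_0: "is_endo f \<Longrightarrow> f 0 = 0"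
  unfolding is_endo_def by (metis add_cancel_right_right)
lemma endo_neg: "is_endo f \<Longrightarrow> f (- x) = - f x"
  unfolding is_endo_def by (metis add.right_inverse endo_0 is_endo_def minus_unique)
lemma endo_sum: "is_endo f \<Longrightarrow> f (sum g A) = (\<Sum>i\<in>A. f (g i))"
  by (induction A rule: infinite_finite_induct) (auto simp: endo_0 is_endo_def)
lemma endo_nsm: "is_endo f \<Longrightarrow> f (nsm n x) = nsm n (f x)"
  by (induction n) (auto simp: endo_0 is_endo_def)
lemma endo_zs: "is_endo f \<Longrightarrow> f (zs k x) = zs k (f x)"
  by (simp add: zs_def endo_nsm endo_neg)
lemma endo_pow: "is_endo f \<Longrightarrow> is_endo (f ^^ n)"
  by (induction n) (auto simp: is_endo_def)




definition evt :: "('a::ab_group_add \<Rightarrow> 'a) \<Rightarrow> 'a \<Rightarrow> int poly \<Rightarrow> 'a" where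
  "evt f t q = (\<Sum>i\<le>degree q. zs (coeff q i) ((f^^i) t))"

lemma evt_bound: "degree q \<le> N \<Longrightarrow> evt f t q = (\<Sum>i\<le>N. zs (coeff q i) ((f^^i) t))"
  unfolding evt_def
  by (rule sum.mono_neutral_left) (auto simp: coeff_eq_0)

lemma evt_0[simp]: "evt f t 0 = 0" by (simp add: evt_def)

lemma evt_add: "evt f t (p + q) = evt f t p + evt f t q"
proof -
  let ?N = "max (degree p) (degree q)"
  have "evt f t (p + q) = (\<Sum>i\<le>?N. zs (coeff (p+q) i) ((f^^i) t))"
    by (rule evt_bound) (simp add: degree_add_le)
  also have "\<dots> = (\<Sum>i\<le>?N. zs (coeff p i) ((f^^i) t)) + (\<Sum>i\<le>?N. zs (coeff q i) ((f^^i) t))"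
    by (simp add: zs_add sum.distrib)
  also have "\<dots> = evt f t p + evt f t q"
    by (simp add: evt_bound[symmetric])
  finally show ?thesis .
qed

lemma evt_smult: "evt f t (smult c q) = zs c (evt f t q)"
proof -
  have "evt f t (smult c q) = (\<Sum>i\<le>degree q. zs (coeff (smult c q) i) ((f^^i) t))"
    by (rule evt_bound) (simp add: degree_smult_le)
  then show ?thesis by (simp add: zs_mult zs_sum evt_def)
qed

lemma evt_minus: "evt f t (- q) = - evt f t q"
proof -
  have "evt f t q + evt f t (-q) = 0" using evt_add[of f t q "-q"] by simp
  then show ?thesis by (metis minus_unique)
qed

lemma evt_diff: "evt f t (p - q) = evt f t p - evt f t q"
  using evt_add[of f t p "-q"] evt_minus[of f t q] by simp

lemma evt_pCons: "evt f t (pCons c q) = zs c t + evt f (f t) q"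
proof -
  have "evt f t (pCons c q) = (\<Sum>i\<le>Suc (degree q). zs (coeff (pCons c q) i) ((f^^i) t))"
    by (rule evt_bound) (simp add: degree_pCons_le)
  also have "\<dots> = zs c t + (\<Sum>i\<le>degree q. zs (coeff q i) ((f^^(Suc i)) t))"
    by (subst sum.atMost_Suc_shift) simp
  also have "\<dots> = zs c t + evt f (f t) q"
    by (simp add: evt_def funpow_Suc_right del: funpow.simps)
  finally show ?thesis .
qed

lemma evt_f: "is_endo f \<Longrightarrow> f (evt f t q) = evt f (f t) q"
  unfolding evt_def by (simp add: endo_sum endo_zs funpow_swap1)

lemma evt_t_add: "is_endo f \<Longrightarrow> evt f (s + s') q = evt f s q + evt f s' q"
  unfolding evt_def using endo_pow[of f]
  by (simp add: is_endo_def zs_plus sum.distrib)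

lemma evt_t_zs: "is_endo f \<Longrightarrow> evt f (zs k s) q = zs k (evt f s q)"
  unfolding evt_def using endo_pow[of f]
  by (simp add: endo_zs zs_sum flip: zs_mult) (simp add: mult.commute)

lemma evt_t_0[simp]: "is_endo f \<Longrightarrow> evt f 0 q = 0"
  unfolding evt_def using endo_pow[of f] by (simp add: endo_0)

lemma evt_pCons0: "is_endo f \<Longrightarrow> evt f t (pCons 0 q) = f (evt f t q)"
  by (simp add: evt_pCons evt_f)

lemma evt_mult: "is_endo f \<Longrightarrow> evt f t (p * q) = evt f (evt f t p) q"
proof (induction q rule: pCons_induct)
  case 0 then show ?case by simp
next
  case (pCons c q)
  have "evt f t (p * pCons c q) = zs c (evt f t p) + f (evt f t (p * q))"
    by (simp add: mult_pCons_right evt_add evt_smult evt_pCons0 pCons.prems)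
  also have "\<dots> = evt f (evt f t p) (pCons c q)"
    using pCons by (simp add: evt_pCons evt_f)
  finally show ?case .
qed

lemma evt_monom: "is_endo f \<Longrightarrow> evt f t (monom c k) = zs c ((f^^k) t)"
proof (induction k)
  case 0 then show ?case by (simp add: monom_0 evt_pCons)
next
  case (Suc k) then show ?case by (simp add: monom_Suc evt_pCons0 endo_zs)
qed

lemma evt_1: "evt f t 1 = t"
  by (simp add: evt_def)

lemma Zphi_sub: assumes "is_endo f" shows "Zphi f a \<subseteq> range (evt f a)"
proof -
  have "is_subgroup (range (evt f a))"
    unfolding is_subgroup_def
    by (auto simp: image_iff, metis evt_0, metis evt_add, metis evt_minus)
  moreover have "f ` range (evt f a) \<subseteq> range (evt f a)"
    using evt_pCons0[OF assms, of a] by (auto, metis rangeI)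
  moreover have "a \<in> range (evt f a)" by (metis evt_1 rangeI)
  ultimately show ?thesis unfolding Zphi_def by blast
qed




lemma coset_eq_diff:
  fixes y y' :: "'a::ab_group_add"
  assumes "0 \<in> K" "(\<lambda>x. y + x) ` K = (\<lambda>x. y' + x) ` K"
  shows "y - y' \<in> K"
proof -
  have "y \<in> (\<lambda>x. y + x) ` K" using assms(1) by force
  then obtain k where "k \<in> K" "y = y' + k" using assms(2) by auto
  then show ?thesis by (simp add: algebra_simps)
qed

lemma pigeon:
  fixes g :: "nat \<Rightarrow> 'b"
  assumes "finite (range g)"
  shows "\<exists>j j'. j \<noteq> j' \<and> g j = g j'"
proof (rule ccontr)
  assume "\<not> ?thesis"
  then have "inj g" by (auto simp: inj_def)
  then have "finite (UNIV :: nat set)" using assms finite_imageD by blast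
  then show False by simp
qed

lemma rel_exists:
  fixes f :: "'a::ab_group_add \<Rightarrow> 'a"
  assumes endo: "is_endo f" and hyp: "inertial f \<or> left_inertial f"
  shows "\<exists>Q i. coeff Q i = 1 \<and> evt f t Q = 0"
proof -
  define E where "E = {q :: int poly. \<forall>i. odd i \<longrightarrow> coeff q i = 0}"
  define X where "X = evt f t ` E"
  have E0: "0 \<in> E" by (simp add: E_def)
  have Emon: "monom 1 (2*j) \<in> E" for j by (auto simp: E_def coeff_monom)
  have X0: "0 \<in> X" unfolding X_def using E0 by (metis evt_0 imageI)
  have sg: "is_subgroup X"
    unfolding is_subgroup_def X_def
  proof (intro conjI ballI)
    show "0 \<in> evt f t ` E" using X0 X_def by simp
  next
    fix x y assume "x \<in> evt f t ` E" "y \<in> evt f t ` E"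
    then obtain p q where "p \<in> E" "q \<in> E" "x = evt f t p" "y = evt f t q" by auto
    then have "p + q \<in> E" "x + y = evt f t (p + q)" by (auto simp: E_def evt_add)
    then show "x + y \<in> evt f t ` E" by blast
  next
    fix x assume "x \<in> evt f t ` E"
    then obtain p where "p \<in> E" "x = evt f t p" by auto
    then have "- p \<in> E" "- x = evt f t (- p)" by (auto simp: E_def evt_minus)
    then show "- x \<in> evt f t ` E" by blast
  qed
  from hyp show ?thesis
  proof
    assume "inertial f"
    then have fin: "finite ((\<lambda>y. (\<lambda>x. y + x) ` X) ` sum_set (f ` X) X)"
      using sg unfolding inertial_def finite_quot_def by blast
    define y where "y j = (f^^(2*j+1)) t" for j
    have ymem: "y j \<in> sum_set (f ` X) X" for j
    proof -
      have "y j = f (evt f t (monom 1 (2*j))) + 0"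
        by (simp add: y_def evt_monom[OF endo])
      moreover have "f (evt f t (monom 1 (2*j))) \<in> f ` X" using Emon X_def by blast
      ultimately show ?thesis using X0 unfolding sum_set_def by blast
    qed
    have finr: "finite (range (\<lambda>j. (\<lambda>x. y j + x) ` X))"
      by (rule finite_subset[OF _ fin]) (use ymem in \<open>auto intro: imageI\<close>)
    obtain j j' where jj: "j \<noteq> j'" "(\<lambda>x. y j + x) ` X = (\<lambda>x. y j' + x) ` X"
      using pigeon[OF finr] by blast
    have "y j - y j' \<in> X" by (rule coset_eq_diff[OF X0 jj(2)])
    then obtain qe where qe: "qe \<in> E" "y j - y j' = evt f t qe" unfolding X_def by blast
    define Q where "Q = monom 1 (2*j+1) - monom 1 (2*j'+1) - qe"
    have "coeff Q (2*j+1) = 1" using qe(1) jj(1) by (simp add: Q_def E_def coeff_monom)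
    moreover have "evt f t Q = 0"
      using qe(2) by (simp add: Q_def evt_diff evt_monom[OF endo] y_def)
    ultimately show ?thesis by blast
  next
    assume "left_inertial f"
    then have fin: "finite ((\<lambda>y. (\<lambda>x. y + x) ` (X \<inter> f ` X)) ` X)"
      using sg unfolding left_inertial_def finite_quot_def by blast
    define y where "y j = (f^^(2*j)) t" for j
    have ymem: "y j \<in> X" for j
    proof -
      have "y j = evt f t (monom 1 (2*j))" by (simp add: y_def evt_monom[OF endo])
      then show ?thesis using Emon[of j] unfolding X_def by blast
    qed
    have finr: "finite (range (\<lambda>j. (\<lambda>x. y j + x) ` (X \<inter> f ` X)))"
      by (rule finite_subset[OF _ fin]) (use ymem in \<open>auto intro: imageI\<close>)
    obtain j j' where jj: "j \<noteq> j'" "(\<lambda>x. y j + x) ` (X \<inter> f ` X) = (\<lambda>x. y j' + x) ` (X \<inter> f ` X)"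
      using pigeon[OF finr] by blast
    have zX: "0 \<in> X \<inter> f ` X"
    proof -
      have "f 0 \<in> f ` X" using X0 by (rule imageI)
      then show ?thesis using X0 endo_0[OF endo] by simp
    qed
    have "y j - y j' \<in> X \<inter> f ` X" by (rule coset_eq_diff[OF zX jj(2)])
    then have "y j - y j' \<in> f ` X" by (rule IntD2)
    then obtain xx where xx: "xx \<in> X" "y j - y j' = f xx" by blast
    from xx(1) obtain qe where qe1: "qe \<in> E" "xx = evt f t qe" unfolding X_def by blast
    have qe: "qe \<in> E" "y j - y j' = f (evt f t qe)" using qe1 xx(2) by simp_all
    define Q where "Q = monom 1 (2*j) - monom 1 (2*j') - pCons 0 qe"
    have "coeff (pCons 0 qe) (2*j) = 0"
    proof (cases "2*j")
      case (Suc m) then have "odd m" by presburger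
      then show ?thesis using qe(1) Suc by (simp add: E_def)
    qed simp
    then have "coeff Q (2*j) = 1" using jj(1) by (simp add: Q_def coeff_monom)
    moreover have "evt f t Q = 0"
    proof -
      have "evt f t Q = y j - y j' - f (evt f t qe)"
        by (simp only: Q_def evt_diff evt_monom[OF endo] y_def evt_pCons0[OF endo] zs_1)
      then show ?thesis using qe(2) by simp
    qed
    ultimately show ?thesis by blast
  qed
qed




lemma zs_comm: "zs a (zs b x) = zs b (zs a x)"
  by (metis mult.commute zs_mult)

lemma zs_mod: assumes "zs (int n) x = 0" shows "zs (c mod int n) x = zs c x"
proof -
  have "c = int n * (c div int n) + c mod int n" by simp
  then have "zs c x = zs (int n * (c div int n)) x + zs (c mod int n) x"
    by (metis zs_add)
  also have "int n * (c div int n) = (c div int n) * int n" by simp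
  then have "zs (int n * (c div int n)) x = 0"
    by (simp only: zs_mult assms zs_zero)
  finally show ?thesis by simp
qed

lemma evt_sum: "evt f t (sum g A) = (\<Sum>i\<in>A. evt f t (g i))"
  by (induction A rule: infinite_finite_induct) (auto simp: evt_add)

lemma finite_orbit:
  fixes f :: "'a::ab_group_add \<Rightarrow> 'a"
  assumes endo: "is_endo f" and hyp: "inertial f \<or> left_inertial f"
  shows "n \<ge> 1 \<Longrightarrow> zs (int n) t = 0 \<Longrightarrow> finite (range (evt f t))"
proof (induction n arbitrary: t rule: less_induct)
  case (less n)
  show ?case
  proof (cases "n = 1")
    case True
    then have "t = 0" using less.prems by (simp add: zs_nat)
    then have "range (evt f t) = {0}" using endo by auto
    then show ?thesis by simp
  next
    case False
    obtain p where p: "prime p" "p dvd n" using prime_factor_nat[OF False] by blast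
    obtain n' where n': "n = p * n'" using p(2) by blast
    have p2: "p \<ge> 2" using p(1) prime_ge_2_nat by blast
    have n'1: "n' \<ge> 1" using less.prems(1) n' by (cases n') auto
    have n'lt: "n' < n" using n' p2 n'1 by simp
    have "zs (int n') (zs (int p) t) = 0"
      using less.prems(2) n' by (simp add: zs_mult[symmetric] mult.commute)
    then have finp: "finite (range (evt f (zs (int p) t)))"
      using less.IH[OF n'lt n'1] by blast
    obtain Q i0 where Q: "coeff Q i0 = 1" "evt f t Q = 0"
      using rel_exists[OF endo hyp] by blast
    define Ind where "Ind = {i. \<not> int p dvd coeff Q i}"
    have i0: "i0 \<in> Ind" using Q(1) p2 unfolding Ind_def
      by (simp add: zdvd1_eq)  
    have IndD: "Ind \<subseteq> {..degree Q}" unfolding Ind_def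
      by (auto, metis coeff_eq_0 dvd_0_right not_le)
    have finI: "finite Ind" using IndD finite_subset by blast
    define M where "M = Max Ind"
    have MI: "M \<in> Ind" unfolding M_def using finI i0 Max_in by blast
    have MD: "M \<le> degree Q" using MI IndD by auto
    have hgt: "int p dvd coeff Q i" if "M < i" for i
    proof (rule ccontr)
      assume "\<not> int p dvd coeff Q i"
      then have "i \<in> Ind" unfolding Ind_def by simp
      then have "i \<le> M" unfolding M_def using Max_ge[OF finI] by blast
      then show False using that by simp
    qed
    let ?x = "\<lambda>i. (f^^i) t"
    define P where "P b \<longleftrightarrow> (\<exists>c d. b = (\<Sum>i<M. zs (c i) (?x i)) + zs (int p) (evt f t d))" for b
    have Pdir: "P (zs (int p) (evt f t d))" for d
      unfolding P_def by (rule exI[of _ "\<lambda>_. 0"], rule exI[of _ d]) simp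
    have Padd: "P (b + b')" if Pbb: "P b" "P b'" for b b'
    proof -
      obtain c d c' d' where "b = (\<Sum>i<M. zs (c i) (?x i)) + zs (int p) (evt f t d)"
          "b' = (\<Sum>i<M. zs (c' i) (?x i)) + zs (int p) (evt f t d')"
        using Pbb unfolding P_def by blast
      then have "b + b' = (\<Sum>i<M. zs (c i + c' i) (?x i)) + zs (int p) (evt f t (d + d'))"
        by (simp add: zs_add sum.distrib evt_add zs_plus algebra_simps)
      then show ?thesis unfolding P_def by (intro exI[of _ "\<lambda>i. c i + c' i"] exI[of _ "d + d'"])
    qed
    have Pzs: "P (zs k b)" if Pbb: "P b" for k b
    proof -
      obtain c d where "b = (\<Sum>i<M. zs (c i) (?x i)) + zs (int p) (evt f t d)"
        using Pbb unfolding P_def by blast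
      then have "zs k b = (\<Sum>i<M. zs (k * c i) (?x i)) + zs (int p) (evt f t (smult k d))"
        using zs_comm[of k "int p"] by (simp add: zs_plus zs_sum zs_mult evt_smult)
      then show ?thesis unfolding P_def by (intro exI[of _ "\<lambda>i. k * c i"] exI[of _ "smult k d"])
    qed
    have P0: "P 0" using Pdir[of 0] by simp
    have Psum: "P (sum g A)" if "\<forall>i\<in>A. P (g i)" for g and A :: "nat set"
      using that by (induction A rule: infinite_finite_induct) (auto simp: P0 Padd)
    have Plow: "P (?x i)" if "i < M" for i
    proof -
      have "(\<Sum>j<M. zs (if j = i then 1 else 0) (?x j)) = (\<Sum>j<M. if j = i then ?x j else 0)"
        by (rule sum.cong) auto
      also have "\<dots> = ?x i" using that by (simp add: sum.delta)
      finally have "?x i = (\<Sum>j<M. zs (if j = i then 1 else 0) (?x j)) + zs (int p) (evt f t 0)"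
        by simp
      then show ?thesis unfolding P_def by (intro exI[of _ "\<lambda>j. if j = i then 1 else 0"] exI[of _ 0])
    qed
    have PM: "P (?x M)"
    proof -
      let ?q = "coeff Q"
      define D where "D = degree Q"
      define Hp where "Hp = (\<Sum>i\<in>{Suc M..D}. monom (?q i div int p) i)"
      have "0 = (\<Sum>i\<le>D. zs (?q i) (?x i))" using Q(2) unfolding evt_def D_def by simp
      also have "{..D} = {..<M} \<union> {M..D}" using MD D_def by auto
      also have "(\<Sum>i\<in>{..<M} \<union> {M..D}. zs (?q i) (?x i))
          = (\<Sum>i<M. zs (?q i) (?x i)) + (\<Sum>i\<in>{M..D}. zs (?q i) (?x i))"
        by (rule sum.union_disjoint) auto
      also have "(\<Sum>i\<in>{M..D}. zs (?q i) (?x i)) = zs (?q M) (?x M) + (\<Sum>i\<in>{Suc M..D}. zs (?q i) (?x i))"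
        using MD D_def by (simp add: sum.atLeast_Suc_atMost)
      also have "(\<Sum>i\<in>{Suc M..D}. zs (?q i) (?x i)) = (\<Sum>i\<in>{Suc M..D}. zs (int p) (zs (?q i div int p) (?x i)))"
      proof (rule sum.cong)
        fix i assume "i \<in> {Suc M..D}"
        then have "int p dvd ?q i" using hgt by auto
        then have "?q i = int p * (?q i div int p)" by simp
        then show "zs (?q i) (?x i) = zs (int p) (zs (?q i div int p) (?x i))"
          by (metis zs_mult)
      qed simp
      also have "\<dots> = zs (int p) (evt f t Hp)"
        by (simp add: Hp_def evt_sum evt_monom[OF endo] zs_sum)
      finally have eq0: "0 = (\<Sum>i<M. zs (?q i) (?x i)) + (zs (?q M) (?x M) + zs (int p) (evt f t Hp))" .
      define Low where "Low = (\<Sum>i<M. zs (?q i) (?x i))"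
      have PL: "P (Low + zs (int p) (evt f t Hp))"
        unfolding Low_def by (intro Padd Psum Pdir ballI Pzs Plow) auto
      have "(Low + zs (int p) (evt f t Hp)) + zs (?q M) (?x M) = 0"
        using eq0 unfolding Low_def by (simp add: algebra_simps)
      then have eqM: "zs (?q M) (?x M) = zs (-1) (Low + zs (int p) (evt f t Hp))"
        by (metis minus_unique zs_1 zs_uminus)
      have "coprime (int p) (?q M)" using MI p(1) unfolding Ind_def
        by (intro prime_imp_coprime) auto
      then obtain u v where uv: "u * ?q M + v * int p = 1"
        using bezout_int[of "?q M" "int p"] by (metis coprime_imp_gcd_eq_1 gcd.commute)
      have "?x M = zs (u * ?q M + v * int p) (?x M)" using uv by simp
      also have "\<dots> = zs u (zs (?q M) (?x M)) + zs (int p) (evt f t (monom v M))"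
        using zs_comm[of v "int p"] by (simp add: zs_add zs_mult evt_monom[OF endo])
      also have "\<dots> = zs (u * -1) (Low + zs (int p) (evt f t Hp)) + zs (int p) (evt f t (monom v M))"
        by (simp only: eqM zs_mult)
      finally have eqx: "?x M = zs (u * -1) (Low + zs (int p) (evt f t Hp)) + zs (int p) (evt f t (monom v M))" .
      show ?thesis unfolding eqx by (intro Padd Pzs PL Pdir)
    qed
    have Pf: "P (f b)" if Pbb: "P b" for b
    proof -
      obtain c d where b: "b = (\<Sum>i<M. zs (c i) (?x i)) + zs (int p) (evt f t d)"
        using Pbb unfolding P_def by blast
      have fb: "f b = (\<Sum>i<M. zs (c i) (?x (Suc i))) + zs (int p) (evt f t (pCons 0 d))"
        unfolding b using endo
        by (simp add: is_endo_def endo_sum endo_zs evt_pCons0)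
      have Pxs: "P (?x (Suc i))" if "i < M" for i
      proof (cases "Suc i = M")
        case True then show ?thesis using PM by metis
      next
        case False then have "Suc i < M" using that by simp
        then show ?thesis using Plow by blast
      qed
      have "\<forall>i\<in>{..<M}. P (zs (c i) (?x (Suc i)))" using Pxs Pzs by blast
      then have "P (\<Sum>i<M. zs (c i) (?x (Suc i)))" by (rule Psum)
      then show ?thesis unfolding fb by (rule Padd[OF _ Pdir])
    qed
    have Pall: "P (?x i)" for i
    proof (induction i)
      case 0 show ?case
      proof (cases "M = 0")
        case True then show ?thesis using PM by simp
      next
        case False then have "P ((f^^0) t)" using Plow[of 0] by simp
        then show ?thesis by simp
      qed
    next
      case (Suc i) then show ?case using Pf by simp
    qed
    have Pev: "P (evt f t q)" for q
      unfolding evt_def by (intro Psum ballI Pzs Pall)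
    define G where "G = (\<lambda>(c, e). (\<Sum>i<M. zs (c i) (?x i)) + e)"
    have xn: "zs (int n) (?x i) = 0" for i
      using less.prems(2) endo_pow[OF endo, of i] by (simp add: endo_zs[symmetric] endo_0)
    have "range (evt f t) \<subseteq> G ` ((PiE {..<M} (\<lambda>_. {0..<int n})) \<times> range (evt f (zs (int p) t)))"
    proof
      fix b assume "b \<in> range (evt f t)"
      then obtain q where "b = evt f t q" by auto
      then obtain c d where b: "b = (\<Sum>i<M. zs (c i) (?x i)) + zs (int p) (evt f t d)"
        using Pev unfolding P_def by blast
      define c' where "c' = (\<lambda>i. if i \<in> {..<M} then c i mod int n else undefined)"
      have npos: "int n > 0" using less.prems(1) by simp
      have cmem: "c' \<in> PiE {..<M} (\<lambda>_. {0..<int n})"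
      proof (rule PiE_I)
        fix i assume "i \<in> {..<M}"
        then show "c' i \<in> {0..<int n}"
          using pos_mod_sign[OF npos, of "c i"] pos_mod_bound[OF npos, of "c i"] by (simp add: c'_def)
      next
        fix i assume "i \<notin> {..<M}"
        then show "c' i = undefined" by (simp add: c'_def)
      qed
      moreover have "(\<Sum>i<M. zs (c' i) (?x i)) = (\<Sum>i<M. zs (c i) (?x i))"
      proof (rule sum.cong)
        fix i assume "i \<in> {..<M}"
        then have "c' i = c i mod int n" unfolding c'_def by simp
        then show "zs (c' i) (?x i) = zs (c i) (?x i)" using zs_mod[OF xn[of i]] by simp
      qed simp
      moreover have "evt f (zs (int p) t) d = zs (int p) (evt f t d)" by (rule evt_t_zs[OF endo])
      ultimately have "b = G (c', evt f (zs (int p) t) d)"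
        unfolding b G_def by simp
      moreover have "(c', evt f (zs (int p) t) d) \<in> (PiE {..<M} (\<lambda>_. {0..<int n})) \<times> range (evt f (zs (int p) t))"
        using cmem by blast
      ultimately show "b \<in> G ` ((PiE {..<M} (\<lambda>_. {0..<int n})) \<times> range (evt f (zs (int p) t)))"
        by (rule image_eqI)
    qed
    moreover have "finite ((PiE {..<M} (\<lambda>_. {0..<int n})) \<times> range (evt f (zs (int p) t)))"
      using finp by (intro finite_cartesian_product finite_PiE) auto
    ultimately show ?thesis by (meson finite_imageI finite_subset)
  qed
qed




theorem lemma4p3:
  fixes f :: "'a::ab_group_add \<Rightarrow> 'a" and a :: 'a
  assumes "is_endo f"
    and "inertial f \<or> left_inertial f"
  shows "finite (torsion_part (Zphi f a))"
proof -
  note endo = assms(1)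
  define ev where "ev = evt f a"
  define J where "J = {q. \<exists>m::int. m \<noteq> 0 \<and> zs m (ev q) = 0}"
  have TJ: "torsion_part (Zphi f a) \<subseteq> ev ` J"
  proof
    fix b assume "b \<in> torsion_part (Zphi f a)"
    then obtain n :: nat where b: "b \<in> Zphi f a" "n \<ge> 1" "(\<Sum>i<n. b) = 0"
      unfolding torsion_part_def by blast
    obtain q where q: "b = ev q" using b(1) Zphi_sub[OF endo] unfolding ev_def by blast
    have "zs (int n) (ev q) = 0" using b(3) q by (simp add: zs_nat nsm_sum)
    moreover have "int n \<noteq> 0" using b(2) by simp
    ultimately have "q \<in> J" unfolding J_def mem_Collect_eq by (intro exI[of _ "int n"] conjI)
    then show "b \<in> ev ` J" using q by (rule rev_image_eqI)
  qed
  have Jsmult_rev: "h \<in> J" if A: "smult c h \<in> J" "c \<noteq> 0" for c h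
  proof -
    obtain m where "m \<noteq> 0" "zs m (ev (smult c h)) = 0" using A(1) unfolding J_def by blast
    then have "m * c \<noteq> 0" "zs (m * c) (ev h) = 0" using A(2)
      by (auto simp: ev_def evt_smult zs_mult)
    then show ?thesis unfolding J_def mem_Collect_eq by (intro exI[of _ "m * c"] conjI)
  qed
  have Jsmult: "smult c h \<in> J" if A: "h \<in> J" for c h
  proof -
    obtain m where "m \<noteq> 0" "zs m (ev h) = 0" using A unfolding J_def by blast
    then have "zs m (ev (smult c h)) = 0"
      by (simp add: ev_def evt_smult zs_comm[of m c])
    then show ?thesis using \<open>m \<noteq> 0\<close> unfolding J_def mem_Collect_eq by (intro exI[of _ m] conjI)
  qed
  have Jdiff: "p - q \<in> J" if A: "p \<in> J" "q \<in> J" for p q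
  proof -
    obtain m where m: "m \<noteq> 0" "zs m (ev p) = 0" using A(1) unfolding J_def by blast
    obtain m' where m': "m' \<noteq> 0" "zs m' (ev q) = 0" using A(2) unfolding J_def by blast
    have "zs (m' * m) (ev (p - q)) = 0"
      unfolding ev_def evt_diff zs_diff
      using m m' by (simp add: ev_def zs_mult) (metis mult.commute zs_mult zs_zero)
    moreover have "m' * m \<noteq> 0" using m m' by simp
    ultimately show ?thesis unfolding J_def mem_Collect_eq by (intro exI[of _ "m' * m"] conjI)
  qed
  have Jmult: "h * s \<in> J" if A: "h \<in> J" for h s
  proof -
    obtain m where m: "m \<noteq> 0" "zs m (ev h) = 0" using A unfolding J_def by blast
    have "zs m (ev (h * s)) = 0"
      using m(2) by (simp add: ev_def evt_mult[OF endo] evt_t_zs[OF endo, symmetric] evt_t_0[OF endo])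
    then show ?thesis using m(1) unfolding J_def mem_Collect_eq by (intro exI[of _ m] conjI)
  qed
  show ?thesis
  proof (cases "J \<subseteq> {0}")
    case True
    then have "ev ` J \<subseteq> ev ` {0}" by (rule image_mono)
    then have "ev ` J \<subseteq> {0}" by (simp add: ev_def)
    then have "torsion_part (Zphi f a) \<subseteq> {0}" using TJ by (rule order_trans[rotated])
    then show ?thesis using finite_subset by blast
  next
    case False
    then obtain g1 where "g1 \<in> J" "g1 \<noteq> 0" by blast
    then obtain g where g: "g \<in> J" "g \<noteq> 0" and gmin: "\<And>h. h \<in> J \<and> h \<noteq> 0 \<Longrightarrow> degree g \<le> degree h"
      using ex_has_least_nat[of "\<lambda>h. h \<in> J \<and> h \<noteq> 0" g1 degree] by blast
    define g0 where "g0 = primitive_part g"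
    have g0ne: "g0 \<noteq> 0" using g(2) by (simp add: g0_def)
    have cg0: "content g0 = 1" using g(2) by (simp add: g0_def)
    have dg0: "degree g0 = degree g" by (simp add: g0_def)
    have "smult (content g) g0 \<in> J" using g(1) by (simp add: g0_def)
    moreover have "content g \<noteq> 0" using g(2) by simp
    ultimately have g0J: "g0 \<in> J" using Jsmult_rev by blast
    define t0 where "t0 = ev g0"
    have JT: "ev ` J \<subseteq> range (evt f t0)"
    proof
      fix b assume "b \<in> ev ` J"
      then obtain q where q: "q \<in> J" "b = ev q" by blast
      obtain s r where sr: "pseudo_divmod q g0 = (s, r)" by (metis surj_pair)
      define k where "k = coeff g0 (degree g0) ^ (Suc (degree q) - degree g0)"
      have eq: "smult k q = g0 * s + r" and rdeg: "r = 0 \<or> degree r < degree g0"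
        using pseudo_divmod[OF g0ne sr] unfolding k_def by auto
      have kne: "k \<noteq> 0" using g0ne unfolding k_def by simp
      have "r = smult k q - g0 * s" using eq by simp
      then have "r \<in> J" using Jdiff Jsmult Jmult q(1) g0J by metis
      then have "r = 0" using rdeg gmin dg0 by fastforce
      then have "g0 dvd smult k q" using eq by simp
      then have "primitive_part g0 dvd primitive_part (smult k q)" by blast
      then have d1: "g0 dvd smult (unit_factor k) (primitive_part q)"
        using cg0 by (simp add: primitive_part_prim primitive_part_smult)
      have "unit_factor k * unit_factor k = 1" using kne
        by (simp add: unit_factor_int_def)
      then have "smult (unit_factor k) (smult (unit_factor k) (primitive_part q)) = primitive_part q"
        by simp
      then have "g0 dvd primitive_part q" using d1 by (metis dvd_smult)
      also have "primitive_part q dvd q" by (metis content_times_primitive_part dvd_smult dvd_refl)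
      finally obtain s' where "q = g0 * s'" by (elim dvdE)
      then have "b = evt f t0 s'" using q(2) by (simp add: ev_def t0_def evt_mult[OF endo])
      then show "b \<in> range (evt f t0)" by blast
    qed
    obtain m where m: "m \<noteq> 0" "zs m t0 = 0" using g0J unfolding J_def t0_def by blast
    have "zs (int (nat \<bar>m\<bar>)) t0 = 0"
    proof (cases "m \<ge> 0")
      case True then show ?thesis using m by simp
    next
      case False then show ?thesis using m by (simp add: zs_uminus)
    qed
    moreover have "nat \<bar>m\<bar> \<ge> 1" using m by simp
    ultimately have "finite (range (evt f t0))"
      by (intro finite_orbit[OF endo assms(2), of "nat \<bar>m\<bar>"])
    then show ?thesis by (rule finite_subset[OF order_trans[OF TJ JT]])
  qed
qed


end
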